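(* Let $T$ be a $\mathbb{Z}_2^2$-cordial tree with $4k$ vertices for some $k\in\mathbb{N}$, and let $T^*$ be a tree containing $T$ as an induced subgraph with $|V(T^* )|\le 4k+3$. Then $T^*$ is $\mathbb{Z}_2^2$-cordial.
   Context: $\mathbb{N}=\mathbb{Z}_{\ge0}$. $\mathbb{Z}_2^2=\mathbb{Z}_2\times\mathbb{Z}_2$ is the Klein four-group. For an abelian group $A$ and a graph $G=(V,E)$, a vertex labeling $\ell:V\to A$ induces an edge labeling $\ell(\{v_1,v_2\})=\ell(v_1)+\ell(v_2)$. Let $f_V(a)=|\{v\in V:\ell(v)=a\}|$ and $f_E(a)=|\{e\in E:\ell(e)=a\}|$. The labeling is $A$-cordial if $|f_V(a_1)-f_V(a_2)|\le 1$ and $|f_E(a_1)-f_E(a_2)|\le 1$ for all $a_1,a_2\in A$; $G$ is $A$-cordial if it admits an $A$-cordial labeling. *)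

theory Defs
  imports Main "HOL-Library.Z2" "HOL-Library.Product_Plus"
begin

definition simple_graph :: "'a set \<Rightarrow> 'a set set \<Rightarrow> bool" where
  "simple_graph V E \<longleftrightarrow> finite V \<and>
     (\<forall>e\<in>E. \<exists>u v. u \<noteq> v \<and> u \<in> V \<and> v \<in> V \<and> e = {u, v})"

definition adj :: "'a set set \<Rightarrow> 'a \<Rightarrow> 'a \<Rightarrow> bool" where
  "adj E u v \<longleftrightarrow> u \<noteq> v \<and> {u, v} \<in> E"

definition graph_connected :: "'a set \<Rightarrow> 'a set set \<Rightarrow> bool" where
  "graph_connected V E \<longleftrightarrow> (\<forall>u\<in>V. \<forall>v\<in>V. (adj E)\<^sup>*\<^sup>* u v)"

definition is_cycle :: "'a set set \<Rightarrow> 'a list \<Rightarrow> bool" where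
  "is_cycle E xs \<longleftrightarrow> length xs \<ge> 3 \<and> distinct xs \<and>
     (\<forall>i. Suc i < length xs \<longrightarrow> adj E (xs ! i) (xs ! Suc i)) \<and>
     adj E (last xs) (hd xs)"

definition acyclic_graph :: "'a set set \<Rightarrow> bool" where
  "acyclic_graph E \<longleftrightarrow> (\<nexists>xs. is_cycle E xs)"

definition is_tree :: "'a set \<Rightarrow> 'a set set \<Rightarrow> bool" where
  "is_tree V E \<longleftrightarrow> simple_graph V E \<and> V \<noteq> {} \<and> graph_connected V E \<and> acyclic_graph E"

definition induced_subgraph :: "'a set \<Rightarrow> 'a set set \<Rightarrow> 'a set \<Rightarrow> 'a set set \<Rightarrow> bool" where
  "induced_subgraph V E V' E' \<longleftrightarrow> V \<subseteq> V' \<and> E = {e \<in> E'. e \<subseteq> V}"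

text \<open>The Klein four-group Z_2 x Z_2 is rendered as the additive group of bit \<times> bit.\<close>
type_synonym klein = "bit \<times> bit"

definition fV :: "'a set \<Rightarrow> ('a \<Rightarrow> klein) \<Rightarrow> klein \<Rightarrow> nat" where
  "fV V l a = card {v \<in> V. l v = a}"

text \<open>Induced edge label: l({v1,v2}) = l v1 + l v2 (well defined since + is commutative).\<close>
definition fE :: "'a set set \<Rightarrow> ('a \<Rightarrow> klein) \<Rightarrow> klein \<Rightarrow> nat" where
  "fE E l a = card {e \<in> E. \<exists>u v. e = {u, v} \<and> u \<noteq> v \<and> l u + l v = a}"

definition klein_cordial_labeling :: "'a set \<Rightarrow> 'a set set \<Rightarrow> ('a \<Rightarrow> klein) \<Rightarrow> bool" where
  "klein_cordial_labeling V E l \<longleftrightarrow>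
     (\<forall>a1 a2. \<bar>int (fV V l a1) - int (fV V l a2)\<bar> \<le> 1 \<and>
              \<bar>int (fE E l a1) - int (fE E l a2)\<bar> \<le> 1)"

definition klein_cordial :: "'a set \<Rightarrow> 'a set set \<Rightarrow> bool" where
  "klein_cordial V E \<longleftrightarrow> (\<exists>l. klein_cordial_labeling V E l)"

end

theory Submission
  imports Defs
begin

lemma UNIV_bit': "(UNIV::bit set) = {0,1}" by (auto intro: bit.exhaust)
lemma UNIV_klein: "(UNIV::klein set) = {(0,0),(0,1),(1,0),(1,1)}"
  using UNIV_bit' by auto
lemma card_klein: "card (UNIV::klein set) = 4" unfolding UNIV_klein by simp
lemma fin_klein: "finite (UNIV::klein set)" unfolding UNIV_klein by simp
lemma klein_self: "(x::klein) + x = 0" by (cases x) (simp add: prod_eq_iff)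

lemma successively_nth:
  "successively R xs \<Longrightarrow> Suc i < length xs \<Longrightarrow> R (xs!i) (xs!Suc i)"
proof (induction R xs arbitrary: i rule: successively.induct)
  case (3 P x y xs)
  then show ?case by (cases i) auto
qed auto

lemma rtranclp_path:
  "R\<^sup>*\<^sup>* a b \<Longrightarrow> \<exists>xs. xs \<noteq> [] \<and> hd xs = a \<and> last xs = b \<and> distinct xs \<and> successively R xs"
proof (induction rule: converse_rtranclp_induct)
  case base
  then show ?case by (intro exI[of _ "[b]"]) auto
next
  case (step a c)
  then obtain ys where ys: "ys \<noteq> []" "hd ys = c" "last ys = b" "distinct ys" "successively R ys"
    by blast
  show ?case
  proof (cases "a \<in> set ys")
    case True
    then obtain us vs where uv: "ys = us @ a # vs" by (meson split_list)
    show ?thesis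
      apply (intro exI[of _ "a # vs"])
      using ys uv by (auto simp: successively_append_iff)
  next
    case False
    show ?thesis
      apply (intro exI[of _ "a # ys"])
      using ys False step(1) by (auto simp: successively_Cons)
  qed
qed

lemma no_alt_path:
  assumes ac: "acyclic_graph E" and ab: "adj E a b"
    and p: "(adj (E - {{a,b}}))\<^sup>*\<^sup>* a b"
  shows False
proof -
  obtain xs where xs: "xs \<noteq> []" "hd xs = a" "last xs = b" "distinct xs"
    "successively (adj (E - {{a,b}})) xs"
    using rtranclp_path[OF p] by blast
  have anb: "a \<noteq> b" using ab by (simp add: adj_def)
  have l3: "length xs \<ge> 3"
  proof (rule ccontr)
    assume "\<not> length xs \<ge> 3"
    moreover have "length xs > 0" using xs(1) by simp
    ultimately have "length xs = 1 \<or> length xs = 2" by linarith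
    then show False
    proof
      assume "length xs = 1"
      then obtain z where "xs = [z]" by (cases xs) auto
      then show False using xs anb by simp
    next
      assume "length xs = 2"
      then obtain z w where "xs = [z, w]"
        by (cases xs; cases "tl xs") auto
      then show False using xs by (auto simp: adj_def)
    qed
  qed
  have "successively (adj E) xs"
    using xs(5) by (rule successively_mono) (auto simp: adj_def)
  moreover have "adj E (last xs) (hd xs)"
    using ab xs by (auto simp: adj_def insert_commute)
  ultimately have "is_cycle E xs"
    using l3 xs(4) successively_nth unfolding is_cycle_def by blast
  then show False using ac unfolding acyclic_graph_def by blast
qed


lemma rtranclp_cross:
  "R\<^sup>*\<^sup>* u v \<Longrightarrow> u \<in> S \<Longrightarrow> v \<notin> S \<Longrightarrow> \<exists>x y. x \<in> S \<and> y \<notin> S \<and> R x y"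
proof (induction rule: rtranclp_induct)
  case (step w v)
  then show ?case by (cases "w \<in> S") auto
qed auto

lemma adj_in: "simple_graph V E \<Longrightarrow> adj E x y \<Longrightarrow> x \<in> V \<and> y \<in> V"
  unfolding simple_graph_def adj_def by (metis doubleton_eq_iff)

lemma tree_grow:
  assumes sg: "simple_graph V' E'" and con: "graph_connected V' E'" and ac: "acyclic_graph E'"
    and step: "\<And>S x y. S \<subseteq> V' \<Longrightarrow> x \<in> S \<Longrightarrow> y \<in> V' \<Longrightarrow> y \<notin> S \<Longrightarrow>
       {e\<in>E'. e \<subseteq> insert y S} = insert {x,y} {e\<in>E'. e \<subseteq> S} \<Longrightarrow>
       {x,y} \<notin> {e\<in>E'. e \<subseteq> S} \<Longrightarrow> Q S \<Longrightarrow> Q (insert y S)"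
  shows "S \<subseteq> V' \<Longrightarrow> S \<noteq> {} \<Longrightarrow> graph_connected S {e\<in>E'. e \<subseteq> S} \<Longrightarrow> Q S \<Longrightarrow> Q V'"
proof (induction "card (V' - S)" arbitrary: S rule: less_induct)
  case (less S)
  have finV: "finite V'" using sg by (simp add: simple_graph_def)
  show ?case
  proof (cases "S = V'")
    case True
    then show ?thesis using less by simp
  next
    case False
    then obtain y0 where y0: "y0 \<in> V'" "y0 \<notin> S" using less.prems(1) by blast
    obtain x0 where x0: "x0 \<in> S" using less.prems(2) by blast
    have r0: "(adj E')\<^sup>*\<^sup>* x0 y0" using con x0 y0 less.prems(1) unfolding graph_connected_def by blast
    then obtain x y where xy: "x \<in> S" "y \<notin> S" "adj E' x y"
      using rtranclp_cross[OF r0 x0 y0(2)] by blast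
    have yV: "y \<in> V'" using adj_in[OF sg xy(3)] by simp
    define ES where "ES = {e\<in>E'. e \<subseteq> S}"
    have xyE: "{x,y} \<in> E'" using xy(3) by (simp add: adj_def)
    have xny: "x \<noteq> y" using xy by blast
    have conS: "(adj ES)\<^sup>*\<^sup>* u v" if "u \<in> S" "v \<in> S" for u v
      using less.prems(3) that unfolding graph_connected_def ES_def by simp
    have eq: "{e\<in>E'. e \<subseteq> insert y S} = insert {x,y} ES"
    proof
      show "insert {x,y} ES \<subseteq> {e\<in>E'. e \<subseteq> insert y S}"
        using xyE xy(1) by (auto simp: ES_def)
    next
      show "{e\<in>E'. e \<subseteq> insert y S} \<subseteq> insert {x,y} ES"
      proof
        fix e assume e: "e \<in> {e\<in>E'. e \<subseteq> insert y S}"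
        show "e \<in> insert {x,y} ES"
        proof (cases "y \<in> e")
          case False
          then show ?thesis using e by (auto simp: ES_def)
        next
          case True
          have eE: "e \<in> E'" using e by simp
          have "\<forall>e\<in>E'. \<exists>u v. u \<noteq> v \<and> u \<in> V' \<and> v \<in> V' \<and> e = {u, v}"
            using sg by (simp add: simple_graph_def)
          then obtain u v where uv: "u \<noteq> v" "e = {u,v}" using eE by meson
          obtain z where z: "e = {z,y}" "z \<noteq> y"
          proof (cases "y = u")
            case True
            then have "e = {v,y}" using uv by blast
            then show ?thesis using that[of v] uv True by blast
          next
            case False
            then have "y = v" using uv \<open>y \<in> e\<close> by blast
            then show ?thesis using that[of u] uv by blast
          qed
          have zS: "z \<in> S" using z e by auto
          show ?thesis
          proof (cases "z = x")
            case True
            then have "e = {x,y}" using z by blast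
            then show ?thesis by simp
          next
            case False
            have azy: "adj E' z y" using z e by (simp add: adj_def)
            have m: "adj ES p q \<longrightarrow> adj (E' - {{z,y}}) p q" for p q
              using xy(2) by (auto simp: adj_def ES_def)
            have "(adj ES)\<^sup>*\<^sup>* z x" using conS zS xy(1) by blast
            then have "(adj (E' - {{z,y}}))\<^sup>*\<^sup>* z x"
              using mono_rtranclp[of "adj ES" "adj (E' - {{z,y}})"] m by simp
            moreover have "adj (E' - {{z,y}}) x y"
              using xy(3) False z(2) by (auto simp: adj_def doubleton_eq_iff)
            ultimately have "(adj (E' - {{z,y}}))\<^sup>*\<^sup>* z y" by simp
            then show ?thesis using no_alt_path[OF ac azy] by blast
          qed
        qed
      qed
    qed
    have notin: "{x,y} \<notin> ES" using xy(2) by (auto simp: ES_def)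
    have con': "graph_connected (insert y S) {e\<in>E'. e \<subseteq> insert y S}"
      unfolding graph_connected_def
    proof (intro ballI)
      fix u v assume uv: "u \<in> insert y S" "v \<in> insert y S"
      let ?R = "adj {e\<in>E'. e \<subseteq> insert y S}"
      have m: "adj ES p q \<longrightarrow> ?R p q" for p q unfolding eq by (auto simp: adj_def)
      have mm: "(adj ES)\<^sup>*\<^sup>* p q \<Longrightarrow> ?R\<^sup>*\<^sup>* p q" for p q
        using mono_rtranclp[of "adj ES" ?R] m by simp
      have xyi: "{x,y} \<in> {e\<in>E'. e \<subseteq> insert y S}" unfolding eq by simp
      have yxe: "{y,x} = {x,y}" by blast
      have r1: "?R x y" "?R y x" using xyi xny yxe unfolding adj_def by auto
      show "?R\<^sup>*\<^sup>* u v"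
      proof (cases "u = y")
        case True
        show ?thesis
        proof (cases "v = y")
          case False
          then have "v \<in> S" using uv(2) by blast
          then have "?R\<^sup>*\<^sup>* x v" using xy(1) by (intro mm conS)
          then show ?thesis using True r1(2) by (meson converse_rtranclp_into_rtranclp)
        qed (use True in simp)
      next
        case uF: False
        show ?thesis
        proof (cases "v = y")
          case True
          have "u \<in> S" using uv(1) uF by blast
          then have "?R\<^sup>*\<^sup>* u x" using xy(1) by (intro mm conS)
          then show ?thesis using True r1(1) by (meson rtranclp.rtrancl_into_rtrancl)
        next
          case False
          then have "u \<in> S" "v \<in> S" using uv uF by blast+
          then show ?thesis by (intro mm conS)
        qed
      qed
    qed
    have Q': "Q (insert y S)"
      using step[OF less.prems(1) xy(1) yV xy(2)] eq notin less.prems(4) unfolding ES_def by simp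
    have "card (V' - insert y S) < card (V' - S)"
      using finV yV xy(2) by (intro psubset_card_mono) auto
    then show ?thesis
      by (rule less.hyps[of "insert y S"]) (use less.prems(1) yV con' Q' in auto)
  qed
qed


lemma tree_edges:
  assumes t: "is_tree V E" shows "card E + 1 = card V"
proof -
  have sg: "simple_graph V E" and con: "graph_connected V E" and ac: "acyclic_graph E"
    and ne: "V \<noteq> {}" using t by (auto simp: is_tree_def)
  obtain v0 where v0: "v0 \<in> V" using ne by blast
  have finV: "finite V" using sg by (simp add: simple_graph_def)
  have sgE: "\<forall>e\<in>E. \<exists>u v. u \<noteq> v \<and> u \<in> V \<and> v \<in> V \<and> e = {u, v}"
    using sg by (simp add: simple_graph_def)
  have finE: "finite E"
  proof -
    have "E \<subseteq> Pow V" using sgE by fastforce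
    then show ?thesis using finV finite_subset by blast
  qed
  have e0: "{e\<in>E. e \<subseteq> {v0}} = {}"
    using sgE by fastforce
  have "card {e\<in>E. e \<subseteq> V} + 1 = card V"
  proof (rule tree_grow[OF sg con ac, where Q = "\<lambda>S. card {e\<in>E. e \<subseteq> S} + 1 = card S"])
    fix S x y
    assume a: "S \<subseteq> V" "x \<in> S" "y \<in> V" "y \<notin> S"
      "{e \<in> E. e \<subseteq> insert y S} = insert {x, y} {e \<in> E. e \<subseteq> S}"
      "{x, y} \<notin> {e \<in> E. e \<subseteq> S}" "card {e \<in> E. e \<subseteq> S} + 1 = card S"
    have "finite S" using a(1) finV finite_subset by blast
    moreover have "finite {e \<in> E. e \<subseteq> S}" using finE by simp
    ultimately show "card {e \<in> E. e \<subseteq> insert y S} + 1 = card (insert y S)"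
      using a by simp
  next
    show "graph_connected {v0} {e \<in> E. e \<subseteq> {v0}}" by (simp add: graph_connected_def)
  qed (use v0 e0 in auto)
  moreover have "{e\<in>E. e \<subseteq> V} = E" using sgE by fastforce
  ultimately show ?thesis by simp
qed

lemma fV_upd:
  assumes "finite S" "y \<notin> S"
  shows "fV (insert y S) (l(y:=c)) a = fV S l a + (if c = a then 1 else 0)"
proof -
  have "{v \<in> insert y S. (l(y:=c)) v = a} = (if c = a then insert y {v\<in>S. l v = a} else {v\<in>S. l v = a})"
    using assms by auto
  then show ?thesis using assms unfolding fV_def by simp
qed

lemma fE_insert:
  assumes "finite ES" "e \<notin> ES" "e = {u,v}" "u \<noteq> v"
  shows "fE (insert e ES) l a = fE ES l a + (if l u + l v = a then 1 else 0)"
proof -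
  have "(\<exists>u' v'. e = {u',v'} \<and> u' \<noteq> v' \<and> l u' + l v' = a) \<longleftrightarrow> l u + l v = a"
    using assms(3,4) by (auto simp: doubleton_eq_iff add.commute)
  then have "{e' \<in> insert e ES. \<exists>u v. e' = {u,v} \<and> u \<noteq> v \<and> l u + l v = a}
    = (if l u + l v = a then insert e {e' \<in> ES. \<exists>u v. e' = {u,v} \<and> u \<noteq> v \<and> l u + l v = a}
       else {e' \<in> ES. \<exists>u v. e' = {u,v} \<and> u \<noteq> v \<and> l u + l v = a})"
    by auto
  then show ?thesis using assms unfolding fE_def by simp
qed

lemma fE_cong:
  assumes "\<forall>e\<in>ES. e \<subseteq> S" "\<forall>v\<in>S. l' v = l v"
  shows "fE ES l' a = fE ES l a"
proof -
  have "{e \<in> ES. \<exists>u v. e = {u,v} \<and> u \<noteq> v \<and> l' u + l' v = a}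
      = {e \<in> ES. \<exists>u v. e = {u,v} \<and> u \<noteq> v \<and> l u + l v = a}"
    using assms by fastforce
  then show ?thesis unfolding fE_def by simp
qed

lemma sum_fV: "finite S \<Longrightarrow> (\<Sum>a\<in>UNIV. fV S l a) = card S"
proof (induction S rule: finite_induct)
  case empty
  then show ?case by (simp add: fV_def)
next
  case (insert y S)
  have "fV (insert y S) l a = fV S l a + (if l y = a then 1 else 0)" for a
    using fV_upd[OF insert(1,2), of l "l y" a] by simp
  then show ?case using insert fin_klein by (simp add: sum.distrib)
qed

lemma sum_fE: "finite ES \<Longrightarrow> \<forall>e\<in>ES. \<exists>u v. e = {u,v} \<and> u \<noteq> v \<Longrightarrow> (\<Sum>a\<in>UNIV. fE ES l a) = card ES"
proof (induction ES rule: finite_induct)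
  case empty
  then show ?case by (simp add: fE_def)
next
  case (insert e ES)
  obtain u v where uv: "e = {u,v}" "u \<noteq> v" using insert by blast
  have "fE (insert e ES) l a = fE ES l a + (if l u + l v = a then 1 else 0)" for a
    using fE_insert[OF insert(1,2) uv] by simp
  then show ?case using insert fin_klein by (simp add: sum.distrib)
qed

lemma min_count:
  fixes f :: "klein \<Rightarrow> nat"
  assumes "\<forall>a b. \<bar>int (f a) - int (f b)\<bar> \<le> 1"
  shows "\<exists>q. card {a. \<forall>b. f a \<le> f b} + (\<Sum>a\<in>UNIV. f a) = 4*(q+1) \<and> 1 \<le> card {a. \<forall>b. f a \<le> f b}"
proof -
  obtain a0 where a0: "\<forall>b. f a0 \<le> f b" using ex_has_least_nat[of "\<lambda>_. True" _ f] by blast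
  define q where "q = f a0"
  define M where "M = {a. \<forall>b. f a \<le> f b}"
  have Mi: "(\<forall>b. f a \<le> f b) \<longleftrightarrow> f a = q" for a using a0 unfolding q_def by (metis le_antisym order_refl)
  have M: "M = {a. f a = q}" using Mi unfolding M_def by blast
  have nM: "a \<notin> M \<Longrightarrow> f a = q + 1" for a
  proof -
    assume "a \<notin> M"
    then have "f a \<noteq> q" using M by simp
    moreover have "q \<le> f a" using a0 unfolding q_def by blast
    moreover have "\<bar>int (f a) - int (f a0)\<bar> \<le> 1" using assms by blast
    ultimately show "f a = q + 1" unfolding q_def by linarith
  qed
  have "(\<Sum>a\<in>UNIV. f a) = (\<Sum>a\<in>UNIV. q + (if a \<in> M then 0 else 1))"
    using nM M by (intro sum.cong) auto
  also have "\<dots> = 4 * q + card (UNIV - M)"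
    using fin_klein card_klein by (simp add: sum.distrib sum.If_cases Diff_eq)
  also have "card (UNIV - M) = 4 - card M"
  proof -
    have "finite M" using fin_klein finite_subset[of M UNIV] by simp
    then show ?thesis using card_klein card_Diff_subset[of M UNIV] by simp
  qed
  finally have s: "(\<Sum>a\<in>UNIV. f a) = 4 * q + (4 - card M)" .
  have "card M \<le> 4" using card_klein fin_klein card_mono[of UNIV M] by simp
  moreover have "card M \<ge> 1"
  proof -
    have "a0 \<in> M" using a0 unfolding M_def by blast
    moreover have "finite M" using fin_klein finite_subset[of M UNIV] by simp
    ultimately have "card M > 0" using card_gt_0_iff by blast
    then show ?thesis by simp
  qed
  ultimately show ?thesis using s unfolding M_def by (intro exI[of _ q]) simp
qed


lemma mult4_aux:
  fixes a t r q :: nat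
  assumes "a + 4*t + r = 4*q + 4" "1 \<le> a" "a \<le> 4" "r \<le> 3"
  shows "a + r = 4"
proof -
  consider "q < t" | "q = t" | "t < q" by linarith
  then show ?thesis
  proof cases
    case 1 then have "q + 1 \<le> t" by simp
    then show ?thesis using assms by linarith
  next
    case 2 then show ?thesis using assms by linarith
  next
    case 3 then have "t + 1 \<le> q" by simp
    then show ?thesis using assms by linarith
  qed
qed

lemma arith4:
  fixes a b n m qV qE :: nat
  assumes "a + n = 4*(qV+1)" "b + m = 4*(qE+1)" "m + 1 = n" "n mod 4 \<noteq> 3" "1 \<le> a" "a \<le> 4" "1 \<le> b" "b \<le> 4"
  shows "a + b > 4"
proof -
  define t where "t = n div 4"
  define r where "r = n mod 4"
  have n: "n = 4*t + r" unfolding t_def r_def by simp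
  have r3: "r \<le> 2" using assms(4) unfolding r_def by linarith
  have "a + r = 4" using mult4_aux[of a t r qV] assms n r3 by simp
  show ?thesis
  proof (cases "r = 0")
    case True
    then obtain t' where "n = 4*t' + 4" "t' + 1 = t" using n assms(3) by (cases t) auto
    then have "b + 4*t' + 3 = 4*qE + 4" using assms(2,3) by simp
    then have "b + 3 = 4" using mult4_aux[of b t' 3 qE] assms by simp
    then show ?thesis using \<open>a + r = 4\<close> True by simp
  next
    case False
    then have "b + 4*t + (r - 1) = 4*qE + 4" using assms(2,3) n by simp
    then have "b + (r - 1) = 4" using mult4_aux[of b t "r-1" qE] assms r3 by simp
    then show ?thesis using \<open>a + r = 4\<close> False r3 by linarith
  qed
qed

lemma bump:
  fixes f :: "klein \<Rightarrow> nat"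
  assumes c: "\<forall>a b. \<bar>int (f a) - int (f b)\<bar> \<le> 1" and m: "\<forall>b. f t \<le> f b"
  shows "\<forall>a b. \<bar>int (f a + (if t = a then 1 else 0)) - int (f b + (if t = b then 1 else 0))\<bar> \<le> 1"
proof (intro allI)
  fix a b
  have h: "\<bar>int (f a) - int (f b)\<bar> \<le> 1" "f t \<le> f a" "f t \<le> f b"
    "\<bar>int (f a) - int (f t)\<bar> \<le> 1" "\<bar>int (f b) - int (f t)\<bar> \<le> 1"
    using c m by blast+
  show "\<bar>int (f a + (if t = a then 1 else 0)) - int (f b + (if t = b then 1 else 0))\<bar> \<le> 1"
    using h by (cases "t = a"; cases "t = b") (auto simp: abs_le_iff)
qed

lemma extend:
  assumes finS: "finite S" and ES2: "\<forall>e\<in>ES. e \<subseteq> S \<and> (\<exists>u v. e = {u,v} \<and> u \<noteq> v)"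
    and finES: "finite ES"
    and cnt: "card ES + 1 = card S" and md: "card S mod 4 \<noteq> 3" and x: "x \<in> S" and y: "y \<notin> S"
    and cord: "klein_cordial_labeling S ES l"
  shows "\<exists>l'. klein_cordial_labeling (insert y S) (insert {x,y} ES) l'"
proof -
  have cv: "\<forall>a b. \<bar>int (fV S l a) - int (fV S l b)\<bar> \<le> 1"
    and ce: "\<forall>a b. \<bar>int (fE ES l a) - int (fE ES l b)\<bar> \<le> 1"
    using cord unfolding klein_cordial_labeling_def by blast+
  define MV where "MV = {a. \<forall>b. fV S l a \<le> fV S l b}"
  define ME where "ME = {a. \<forall>b. fE ES l a \<le> fE ES l b}"
  have sV: "(\<Sum>a\<in>UNIV. fV S l a) = card S" using sum_fV[OF finS] .
  have sE: "(\<Sum>a\<in>UNIV. fE ES l a) = card ES" using sum_fE[OF finES] ES2 by blast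
  have "\<exists>q. card MV + card S = 4*(q+1) \<and> 1 \<le> card MV"
    using min_count[OF cv] unfolding sV MV_def .
  then obtain qV where qV: "card MV + card S = 4*(qV+1)" "1 \<le> card MV" by blast
  have "\<exists>q. card ME + card ES = 4*(q+1) \<and> 1 \<le> card ME"
    using min_count[OF ce] unfolding sE ME_def .
  then obtain qE where qE: "card ME + card ES = 4*(qE+1)" "1 \<le> card ME" by blast
  have finMV: "finite MV" by (rule finite_subset[OF subset_UNIV fin_klein])
  have finME: "finite ME" by (rule finite_subset[OF subset_UNIV fin_klein])
  have "card MV \<le> 4" using card_mono[OF fin_klein subset_UNIV, of MV] card_klein by simp
  have "card ME \<le> 4" using card_mono[OF fin_klein subset_UNIV, of ME] card_klein by simp
  have big: "card MV + card ME > 4"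
    using arith4[OF qV(1) qE(1) cnt md qV(2) \<open>card MV \<le> 4\<close> qE(2) \<open>card ME \<le> 4\<close>] .
  define I where "I = (\<lambda>e. l x + e) ` ME"
  have "inj_on (\<lambda>e. l x + e) ME" by (rule inj_onI) simp
  then have cI: "card I = card ME" unfolding I_def by (rule card_image)
  have finI: "finite I" unfolding I_def using finME by simp
  have "card (MV \<union> I) \<le> 4" using card_mono[OF fin_klein subset_UNIV, of "MV \<union> I"] card_klein by simp
  moreover have "card (MV \<union> I) + card (MV \<inter> I) = card MV + card I"
    using card_Un_Int[OF finMV finI] by simp
  ultimately have "card (MV \<inter> I) > 0" using big cI by linarith
  then have "MV \<inter> I \<noteq> {}"
  proof (intro notI)
    assume "0 < card (MV \<inter> I)" "MV \<inter> I = {}"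
    then show False by simp
  qed
  then obtain c e where cex: "c \<in> MV" "e \<in> ME" "c = l x + e" unfolding I_def by blast
  have lxc: "l x + c = e"
  proof -
    have "l x + c = l x + (l x + e)" using cex(3) by simp
    also have "\<dots> = (l x + l x) + e" by (rule add.assoc[symmetric])
    also have "\<dots> = e" by (simp only: klein_self add_0_left)
    finally show ?thesis .
  qed
  define l' where "l' = l(y:=c)"
  have xy: "x \<noteq> y" using x y by blast
  have fv': "fV (insert y S) l' a = fV S l a + (if c = a then 1 else 0)" for a
    unfolding l'_def by (rule fV_upd[OF finS y])
  have notin: "{x,y} \<notin> ES"
  proof
    assume "{x,y} \<in> ES"
    with ES2 have "{x,y} \<subseteq> S \<and> (\<exists>u v. {x,y} = {u,v} \<and> u \<noteq> v)" by (rule bspec)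
    then show False using y by simp
  qed
  have fe': "fE (insert {x,y} ES) l' a = fE ES l a + (if e = a then 1 else 0)" for a
  proof -
    have "fE (insert {x,y} ES) l' a = fE ES l' a + (if l' x + l' y = a then 1 else 0)"
      by (rule fE_insert[OF finES notin refl xy])
    moreover have "fE ES l' a = fE ES l a"
    proof (rule fE_cong)
      show "\<forall>e\<in>ES. e \<subseteq> S" using ES2 by simp
      show "\<forall>v\<in>S. l' v = l v" using y unfolding l'_def by auto
    qed
    moreover have "l' x + l' y = e" using xy lxc by (simp add: l'_def)
    ultimately show ?thesis by simp
  qed
  have mV: "\<forall>b. fV S l c \<le> fV S l b" using cex(1) unfolding MV_def by blast
  have mE: "\<forall>b. fE ES l e \<le> fE ES l b" using cex(2) unfolding ME_def by blast
  have "klein_cordial_labeling (insert y S) (insert {x,y} ES) l'"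
    unfolding klein_cordial_labeling_def fv' fe'
    using bump[OF cv mV] bump[OF ce mE] by blast
  then show ?thesis by blast
qed

lemma sg_edge: "simple_graph V E \<Longrightarrow> e \<in> E \<Longrightarrow> \<exists>u v. u \<noteq> v \<and> u \<in> V \<and> v \<in> V \<and> e = {u,v}"
  by (simp add: simple_graph_def)

lemma sg_pow: assumes "simple_graph V E" shows "E \<subseteq> Pow V"
proof
  fix e assume "e \<in> E"
  then obtain u v where "u \<in> V" "v \<in> V" "e = {u,v}" using sg_edge[OF assms] by blast
  then show "e \<in> Pow V" by simp
qed

lemma sg_fin: assumes "simple_graph V E" shows "finite E"
proof -
  have "finite V" using assms by (simp add: simple_graph_def)
  then show ?thesis using sg_pow[OF assms] finite_subset by blast
qed

lemma sg_two: assumes "simple_graph V E" shows "\<forall>e\<in>{e\<in>E. e \<subseteq> S}. e \<subseteq> S \<and> (\<exists>u v. e = {u,v} \<and> u \<noteq> v)"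
proof
  fix e assume h: "e \<in> {e\<in>E. e \<subseteq> S}"
  then have "e \<in> E" "e \<subseteq> S" by simp_all
  moreover obtain u v where "u \<noteq> v" "e = {u,v}" using sg_edge[OF assms \<open>e \<in> E\<close>] by blast
  ultimately show "e \<subseteq> S \<and> (\<exists>u v. e = {u,v} \<and> u \<noteq> v)" by blast
qed

theorem lemma4p3:
  fixes V :: "'a set" and E :: "'a set set" and V' :: "'a set" and E' :: "'a set set"
    and k :: nat
  assumes "is_tree V E" and "klein_cordial V E" and "card V = 4 * k"
    and "is_tree V' E'" and "induced_subgraph V E V' E'" and "card V' \<le> 4 * k + 3"
  shows "klein_cordial V' E'"
proof -
  have sg: "simple_graph V' E'" and con: "graph_connected V' E'" and ac: "acyclic_graph E'"
    using assms(4) by (auto simp: is_tree_def)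
  have finV': "finite V'" using sg by (simp add: simple_graph_def)
  have finE': "finite E'" by (rule sg_fin[OF sg])
  have VV: "V \<subseteq> V'" and EE: "E = {e\<in>E'. e \<subseteq> V}"
    using assms(5) by (auto simp: induced_subgraph_def)
  have cE: "card E + 1 = card V" using tree_edges[OF assms(1)] .
  have Vne: "V \<noteq> {}" and conV: "graph_connected V E" using assms(1) by (auto simp: is_tree_def)
  let ?Q = "\<lambda>S. 4*k \<le> card S \<and> card {e\<in>E'. e \<subseteq> S} + 1 = card S \<and> klein_cordial S {e\<in>E'. e \<subseteq> S}"
  have "?Q V'"
  proof (rule tree_grow[OF sg con ac, where Q = ?Q])
    fix S x y
    assume a: "S \<subseteq> V'" "x \<in> S" "y \<in> V'" "y \<notin> S"
      "{e \<in> E'. e \<subseteq> insert y S} = insert {x, y} {e \<in> E'. e \<subseteq> S}"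
      "{x, y} \<notin> {e \<in> E'. e \<subseteq> S}" "?Q S"
    have finS: "finite S" using a(1) finV' finite_subset by blast
    have "insert y S \<subseteq> V'" using a by blast
    then have "card (insert y S) \<le> card V'" using card_mono[OF finV'] by blast
    then have c1: "card S + 1 \<le> 4*k + 3" using assms(6) finS a(4) by simp
    have md: "card S mod 4 \<noteq> 3"
    proof
      assume h: "card S mod 4 = 3"
      have "card S = 4 * (card S div 4) + 3" using h by (metis mod_mult_div_eq add.commute)
      moreover have "4*k \<le> card S" using a(7) by simp
      ultimately show False using c1
        by (cases "card S div 4 < k") linarith+
    qed
    have ES2: "\<forall>e\<in>{e \<in> E'. e \<subseteq> S}. e \<subseteq> S \<and> (\<exists>u v. e = {u,v} \<and> u \<noteq> v)"
      by (rule sg_two[OF sg])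
    have finES: "finite {e \<in> E'. e \<subseteq> S}" using finE' by simp
    have cntS: "card {e \<in> E'. e \<subseteq> S} + 1 = card S" using a(7) by simp
    obtain l where l: "klein_cordial_labeling S {e \<in> E'. e \<subseteq> S} l"
      using a(7) unfolding klein_cordial_def by blast
    obtain l' where "klein_cordial_labeling (insert y S) (insert {x,y} {e \<in> E'. e \<subseteq> S}) l'"
      using extend[OF finS ES2 finES cntS md a(2) a(4) l] by blast
    then have "klein_cordial (insert y S) {e \<in> E'. e \<subseteq> insert y S}"
      unfolding a(5) klein_cordial_def by blast
    moreover have "card {e \<in> E'. e \<subseteq> insert y S} + 1 = card (insert y S)"
      using a(4,5,6,7) finS finE' by simp
    moreover have "4*k \<le> card (insert y S)" using a(4,7) finS by simp
    ultimately show "?Q (insert y S)" by blast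
  next
    show "V \<subseteq> V'" by (rule VV)
    show "V \<noteq> {}" by (rule Vne)
    show "graph_connected V {e \<in> E'. e \<subseteq> V}" using conV EE by simp
    show "?Q V" using cE EE assms(2,3) by simp
  qed
  moreover have "{e\<in>E'. e \<subseteq> V'} = E'" using sg_pow[OF sg] by blast
  ultimately show ?thesis by simp
qed


end
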